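(* In the setting described in the context, for $n\ge1$ let $u_n=\min\{x\in[d,v]: f^{2n}(x)=d\}$, and for $n\ge1$, $i\ge1$ let $u'_{n,i}=\max\{x\in[u_{n+1},u_n]: f^{2n+2i}(x)=d\}$ (these sets are nonempty). Then for each $n\ge1$ and $i\ge1$, on the interval $[u'_{n,i},u_n]$ the map $f$ has no periodic points whose least period is odd and $\le 2n+2i+1$, and no periodic points whose least period is even and $\le 2n+2i$ except points of least period $2n+2i$ and possibly points of least period $2n$.
   Context: Let $I$ be a compact interval and $f:I\to I$ continuous; $f^1=f$, $f^n=f\circ f^{n-1}$. A point $x_0$ is a periodic point of least period $k$ (a period-$k$ point) if $f^k(x_0)=x_0$ and $f^i(x_0)\ne x_0$ for $0<i<k$. Let $m\ge3$ be odd and let $P$ be a periodic orbit of $f$ of least period $m$. Put $e=f^{m-1}(\min P)$. Let $v\in[\min P,e)$ be a point with $f(v)=e$, and let $z\in(v,e)$ be a fixed point of $f$ (such points exist). Define $z_0=\min\{x\in[v,z]: f^2(x)=x\}$ and $d=\max\{x\in[\min P,v]: f^2(x)=z_0\}$ (both sets are nonempty). *)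

theory Defs
  imports "HOL-Analysis.Analysis"
begin

definition least_period :: "(real \<Rightarrow> real) \<Rightarrow> nat \<Rightarrow> real \<Rightarrow> bool" where
  "least_period f k x \<longleftrightarrow> 0 < k \<and> (f ^^ k) x = x \<and> (\<forall>i. 0 < i \<and> i < k \<longrightarrow> (f ^^ i) x \<noteq> x)"

end

theory Submission
  imports Defs
begin

lemma funpow_in:
  assumes "f ` {a..b} \<subseteq> {a..b::real}" "x \<in> {a..b}"
  shows "(f^^k) x \<in> {a..b}"
  using assms by (induction k) (auto simp: image_subset_iff)

lemma funpow_img:
  assumes "f ` {a..b} \<subseteq> {a..b::real}"
  shows "(f^^k) ` {a..b} \<subseteq> {a..b}"
  using funpow_in[OF assms] by blast

lemma funpow_cont:
  assumes "continuous_on {a..b::real} f" "f ` {a..b} \<subseteq> {a..b}"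
  shows "continuous_on {a..b} (f^^k)"
proof (induction k)
  case 0 then show ?case by (simp add: continuous_on_id)
next
  case (Suc k)
  have "continuous_on {a..b} (\<lambda>x. f ((f^^k) x))"
    by (rule continuous_on_compose2[OF assms(1) Suc funpow_img[OF assms(2)]])
  then show ?case by (simp add: o_def)
qed

lemma ivt_both:
  fixes h :: "real \<Rightarrow> real"
  assumes "continuous_on {s..t} h" "s \<le> t" "(h s \<le> c \<and> c \<le> h t) \<or> (h t \<le> c \<and> c \<le> h s)"
  shows "\<exists>x\<in>{s..t}. h x = c"
  using assms IVT'[of h s c t] IVT2'[of h t c s] by (auto simp: Bex_def)

lemma funpow_mult_fix:
  assumes "(h^^k) x = x" shows "(h^^(k*r)) x = x"
proof (induction r)
  case 0 then show ?case by simp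
next
  case (Suc r)
  have "(h^^(k*Suc r)) x = (h^^k) ((h^^(k*r)) x)" by (simp add: funpow_add)
  then show ?case using Suc assms by simp
qed

lemma funpow2_add: "(f ^^ (2 * (s + t))) x = (f ^^ (2 * s)) ((f ^^ (2 * t)) x)"
  by (simp add: add_mult_distrib2 funpow_add)


locale L8 =
  fixes f :: "real \<Rightarrow> real" and a b p v z z0 d :: real and m :: nat and P :: "real set"
  assumes ab: "a \<le> b" and cont: "continuous_on {a..b} f" and inv: "f ` {a..b} \<subseteq> {a..b}"
    and modd: "odd m" and m3: "m \<ge> 3" and pab: "p \<in> {a..b}" and lp: "least_period f m p"
    and Pdef: "P = {(f ^^ k) p | k. k < m}"
    and vmem: "v \<in> {Min P..<(f ^^ (m - 1)) (Min P)}" and fv: "f v = (f ^^ (m - 1)) (Min P)"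
    and zmem: "z \<in> {v<..<(f ^^ (m - 1)) (Min P)}" and fz: "f z = z"
    and z0def: "z0 = Inf {x \<in> {v..z}. (f ^^ 2) x = x}"
    and ddef: "d = Sup {x \<in> {Min P..v}. (f ^^ 2) x = z0}"
begin

abbreviation "a0 \<equiv> Min P"
abbreviation "e \<equiv> (f ^^ (m - 1)) a0"
abbreviation "g \<equiv> f ^^ 2"
abbreviation "G t \<equiv> f ^^ (2 * t)"

lemma g_eq: "g x = f (f x)" by (simp add: numeral_2_eq_2)

lemma pm: "(f^^m) p = p" and pne: "0 < i \<Longrightarrow> i < m \<Longrightarrow> (f^^i) p \<noteq> p"
  using lp unfolding least_period_def by auto

lemma orbit_mod: "(f^^s) p = (f^^(s mod m)) p"
proof -
  have "(f^^s) p = (f^^(s mod m + m * (s div m))) p" by simp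
  also have "\<dots> = (f^^(s mod m)) ((f^^(m * (s div m))) p)" by (simp only: funpow_add comp_apply)
  also have "(f^^(m * (s div m))) p = p" using funpow_mult_fix[OF pm] by blast
  finally show ?thesis .
qed

lemma orbit_P: "(f^^s) p \<in> P"
  unfolding Pdef using orbit_mod[of s] m3 by (intro CollectI exI[of _ "s mod m"]) auto

lemma P_img: "P = (\<lambda>k. (f^^k) p) ` {..<m}" unfolding Pdef by auto

lemma Pfin: "finite P" using P_img by simp
lemma pP: "p \<in> P" unfolding Pdef using m3 by (auto intro!: exI[of _ 0])
lemma Pne: "P \<noteq> {}" using pP by auto

lemma P_inv: "x \<in> P \<Longrightarrow> (f^^s) x \<in> P"
proof -
  assume "x \<in> P"
  then obtain k where "x = (f^^k) p" unfolding Pdef by auto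
  then have "(f^^s) x = (f^^(s+k)) p" by (simp add: funpow_add)
  then show ?thesis using orbit_P by simp
qed

lemma P_ab: "P \<subseteq> {a..b}"
  unfolding Pdef using funpow_in[OF inv pab] by auto

lemma a0P: "a0 \<in> P" using Pfin Pne by simp

lemma a0_le: "x \<in> P \<Longrightarrow> a0 \<le> x" using Pfin by simp

lemma a0_fm: "(f^^m) a0 = a0"
proof -
  obtain j where j: "a0 = (f^^j) p" using a0P unfolding Pdef by auto
  have "(f^^m) a0 = (f^^j) ((f^^m) p)" unfolding j by (metis add.commute comp_apply funpow_add)
  then show ?thesis using pm j by simp
qed

lemma f_a0: "f a0 \<noteq> a0"
proof
  assume h: "f a0 = a0"
  have all: "(f^^s) a0 = a0" for s by (induction s) (simp_all add: h)
  obtain j where j: "a0 = (f^^j) p" "j < m" using a0P unfolding Pdef by auto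
  have "(f^^(m-j)) a0 = (f^^(m - j + j)) p" unfolding j(1) by (simp add: funpow_add)
  also have "m - j + j = m" using j by simp
  finally have "p = a0" using all pm by simp
  then have "(f^^1) p = p" using h by simp
  then show False using pne[of 1] m3 by simp
qed

lemma f_e: "f e = a0"
proof -
  have "f e = (f^^(Suc (m-1))) a0" by simp
  also have "Suc (m-1) = m" using m3 by simp
  finally show ?thesis using a0_fm by simp
qed

lemma eP: "e \<in> P" using P_inv[OF a0P] .

lemma a0_ab: "a0 \<in> {a..b}" and e_ab: "e \<in> {a..b}" using P_ab a0P eP by auto

lemma gv: "g v = a0" using fv f_e by (simp add: g_eq)

lemma G_fix: "g c = c \<Longrightarrow> G t c = c"
  using funpow_mult_fix[where h=f and k=2 and x=c and r=t] by simp

lemma G_Suc: "G (Suc t) x = g (G t x)"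
  using funpow2_add[where f=f and s=1 and t=t and x=x] by simp

lemma a0_lt_v: "a0 < v"
proof -
  have "a0 \<le> v" using vmem by simp
  moreover have "v \<noteq> a0"
  proof
    assume "v = a0"
    then have "g a0 = a0" using gv by simp
    then have "G ((m-1) div 2) a0 = a0" by (rule G_fix)
    moreover have "2 * ((m-1) div 2) = m - 1" using modd by (auto elim!: oddE)
    ultimately have "e = a0" by simp
    then show False using f_e f_a0 by simp
  qed
  ultimately show ?thesis by simp
qed

lemma cG: "a \<le> s \<Longrightarrow> t \<le> b \<Longrightarrow> continuous_on {s..t} (f^^k)"
  using continuous_on_subset[OF funpow_cont[OF cont inv, of k]] by auto

lemma cf: "a \<le> s \<Longrightarrow> t \<le> b \<Longrightarrow> continuous_on {s..t} f"
  using cG[of s t 1] by simp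

lemma v_ab: "a \<le> v" "z \<le> b" "v < z" "z < e" "v < e"
  using vmem zmem a0_ab e_ab a0_lt_v by auto

definition "S0 = {x \<in> {v..z}. g x = x}"

lemma S0_closed: "closed S0"
proof -
  have c: "continuous_on {v..z} (\<lambda>x. g x - x)"
    using cG[of v z 2] v_ab by (intro continuous_intros) auto
  have "closed {x \<in> {v..z}. g x - x = 0}" using continuous_closed_preimage_constant[OF c] by blast
  moreover have "S0 = {x \<in> {v..z}. g x - x = 0}" unfolding S0_def by auto
  ultimately show ?thesis by simp
qed

lemma z0S: "z0 \<in> S0"
proof -
  have "z \<in> S0" unfolding S0_def using fz v_ab by (simp add: g_eq)
  then have "S0 \<noteq> {}" by auto
  moreover have "bdd_below S0" unfolding S0_def by (auto intro: bdd_belowI[of _ v])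
  ultimately show ?thesis using closed_contains_Inf[OF _ _ S0_closed] z0def S0_def by simp
qed

lemma z0_props: "v \<le> z0" "z0 \<le> z" "g z0 = z0" using z0S unfolding S0_def by auto

lemma z0_min: "x \<in> {v..z} \<Longrightarrow> g x = x \<Longrightarrow> z0 \<le> x"
  unfolding z0def by (rule cInf_lower) (auto intro: bdd_belowI[of _ v])

lemma v_lt_z0: "v < z0"
proof -
  have "z0 \<noteq> v" using z0_props gv a0_lt_v by auto
  then show ?thesis using z0_props by simp
qed

lemma F3: assumes "x \<in> {v..<z0}" shows "g x < x"
proof (rule ccontr)
  assume "\<not> g x < x"
  have c: "continuous_on {v..x} (\<lambda>y. g y - y)"
    using cG[of v x 2] v_ab assms z0_props by (intro continuous_intros) auto
  have "g v - v \<le> 0" "0 \<le> g x - x" using gv a0_lt_v \<open>\<not> g x < x\<close> by auto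
  then obtain y where y: "y \<in> {v..x}" "g y - y = 0" using ivt_both[OF c, of 0] assms by auto
  then have "z0 \<le> y" using z0_min[of y] assms z0_props by auto
  then show False using y assms by auto
qed

definition "D0 = {x \<in> {a0..v}. g x = z0}"

lemma D0_closed: "closed D0"
  unfolding D0_def using cG[of a0 v 2] a0_ab v_ab
  by (intro continuous_closed_preimage_constant) auto

lemma e_even: "G ((m-1) div 2) a0 = e"
proof -
  have "2 * ((m-1) div 2) = m - 1" using modd by (auto elim!: oddE)
  then show ?thesis by simp
qed

lemma D0_ne: "D0 \<noteq> {}"
proof -
  have ex: "\<exists>t. z0 \<le> G t a0" using e_even v_ab z0_props by (intro exI[of _ "(m-1) div 2"]) simp
  define t where "t = (LEAST t. z0 \<le> G t a0)"
  have t1: "z0 \<le> G t a0" unfolding t_def using LeastI_ex[OF ex] .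
  have t2: "s < t \<Longrightarrow> G s a0 < z0" for s unfolding t_def using not_less_Least by force
  have "t \<noteq> 0" using t1 a0_lt_v v_lt_z0 by (cases "t = 0") auto
  then obtain s where ts: "t = Suc s" by (cases t) auto
  define c where "c = G s a0"
  have cz: "c < z0" using t2[of s] ts c_def by simp
  have gc: "z0 \<le> g c" using t1 G_Suc[of s a0] ts c_def by simp
  have cP: "c \<in> P" unfolding c_def using P_inv[OF a0P] .
  have "c < v"
  proof (rule ccontr)
    assume "\<not> c < v"
    then have "g c < c" using F3 cz by auto
    then show False using gc cz by simp
  qed
  moreover have "a0 \<le> c" using a0_le[OF cP] .
  moreover have "continuous_on {c..v} g" using cG[of c v 2] a0_ab v_ab \<open>a0 \<le> c\<close> by auto
  ultimately obtain x where "x \<in> {c..v}" "g x = z0"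
    using ivt_both[of c v g z0] gc gv a0_lt_v v_lt_z0 by auto
  then have "x \<in> D0" unfolding D0_def using \<open>a0 \<le> c\<close> by auto
  then show ?thesis by auto
qed

lemma dD: "d \<in> D0"
proof -
  have "bdd_above D0" unfolding D0_def by (auto intro: bdd_aboveI[of _ v])
  then show ?thesis using closed_contains_Sup[OF D0_ne _ D0_closed] ddef D0_def by simp
qed

lemma d_props: "a0 \<le> d" "d \<le> v" "g d = z0" using dD unfolding D0_def by auto

lemma d_max: "x \<in> {a0..v} \<Longrightarrow> g x = z0 \<Longrightarrow> x \<le> d"
  unfolding ddef by (rule cSup_upper) (auto intro: bdd_aboveI[of _ v])

lemma d_lt_v: "d < v"
proof -
  have "d \<noteq> v" using d_props gv a0_lt_v v_lt_z0 by auto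
  then show ?thesis using d_props by simp
qed

lemma d_ab: "a \<le> d" using d_props a0_ab by auto
lemma z0_ab: "z0 \<le> b" using z0_props v_ab by auto

lemma F4: assumes "x \<in> {d<..v}" shows "g x < z0"
proof (rule ccontr)
  assume "\<not> g x < z0"
  have c: "continuous_on {x..v} g" using cG[of x v 2] assms d_ab v_ab by auto
  obtain y where y: "y \<in> {x..v}" "g y = z0"
    using ivt_both[OF c, of z0] assms \<open>\<not> g x < z0\<close> gv a0_lt_v v_lt_z0 by auto
  then have "y \<le> d" using d_max[of y] assms d_props by auto
  then show False using y assms by auto
qed

lemma F5: "x \<in> {d<..<z0} \<Longrightarrow> g x < z0"
  using F4[of x] F3[of x] by (cases "x \<le> v") auto

lemma F5': "x \<in> {d..z0} \<Longrightarrow> g x \<le> z0"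
  using F5[of x] d_props z0_props by (cases "x = d \<or> x = z0") auto

lemma fz0: "z0 \<le> f z0"
proof (rule ccontr)
  assume h: "\<not> z0 \<le> f z0"
  have c: "continuous_on {v..z0} (\<lambda>y. f y - y)"
    using cf[of v z0] v_ab z0_ab by (intro continuous_intros) auto
  have "f z0 - z0 \<le> 0" "0 \<le> f v - v" using h fv v_ab by auto
  then obtain y where y: "y \<in> {v..z0}" "f y - y = 0" using ivt_both[OF c, of 0] v_lt_z0 by auto
  have "y \<noteq> z0" using y h by auto
  have "g y = y" using y by (simp add: g_eq)
  then show False using F3[of y] y \<open>y \<noteq> z0\<close> by auto
qed

lemma Phi: assumes "x \<in> {d<..<z0}" shows "z0 < f x"
proof (rule ccontr)
  assume h: "\<not> z0 < f x"
  have fv': "z0 \<le> f v" using fv v_ab z0_props by auto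
  have "\<exists>y\<in>{min x v..max x v}. f y = z0"
  proof (cases "x \<le> v")
    case True
    then show ?thesis using ivt_both[of x v f z0] cf[of x v] assms d_ab v_ab h fv' by auto
  next
    case False
    then show ?thesis using ivt_both[of v x f z0] cf[of v x] assms z0_ab v_ab h fv' by auto
  qed
  then obtain y where y: "y \<in> {min x v..max x v}" "f y = z0" by auto
  have yin: "y \<in> {d<..<z0}" using y assms d_lt_v v_lt_z0 by auto
  have "g y = f z0" using y by (simp add: g_eq)
  then show False using F5[OF yin] fz0 by simp
qed

definition "U n = {x \<in> {d..v}. G n x = d}"
definition "u n = Inf (U n)"

lemma U_closed: "closed (U n)"
  unfolding U_def using cG[of d v "2*n"] d_ab v_ab
  by (intro continuous_closed_preimage_constant) auto

lemma uU: assumes "U n \<noteq> {}" shows "u n \<in> U n"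
proof -
  have "bdd_below (U n)" unfolding U_def by (auto intro: bdd_belowI[of _ d])
  then show ?thesis unfolding u_def using closed_contains_Inf[OF assms _ U_closed] by blast
qed

lemma u_min: "x \<in> U n \<Longrightarrow> u n \<le> x"
  unfolding u_def U_def by (rule cInf_lower) (auto intro: bdd_belowI[of _ d])

lemma G_add: "G (s + t) x = G s (G t x)" using funpow2_add[where f=f and s=s and t=t and x=x] .

lemma G_d: assumes "1 \<le> t" shows "G t d = z0"
proof -
  have "G ((t-1) + 1) d = G (t-1) (G 1 d)" by (rule G_add)
  then show ?thesis using assms d_props G_fix[OF z0_props(3)] by simp
qed

lemma d_lt_z0: "d < z0" using d_lt_v v_lt_z0 by simp

lemma U1: "U 1 \<noteq> {}"
proof -
  have "\<exists>x\<in>{d..v}. g x = d" using ivt_both[of d v g d] cG[of d v 2] d_ab v_ab d_lt_v gv d_props d_lt_z0 by auto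
  then show ?thesis unfolding U_def by auto
qed

lemma u1: "u 1 \<in> U 1" "d < u 1"
proof -
  show "u 1 \<in> U 1" using uU[OF U1] .
  then have "u 1 \<noteq> d" using G_d[of 1] d_lt_z0 unfolding U_def by auto
  then show "d < u 1" using \<open>u 1 \<in> U 1\<close> unfolding U_def by auto
qed

lemma U_step: assumes "1 \<le> n" "U n \<noteq> {}" shows "U (Suc n) \<noteq> {} \<and> u (Suc n) < u n"
proof -
  have un: "u n \<in> U n" using uU[OF assms(2)] .
  have hu1: "d \<le> u 1" "u 1 \<le> z0" using u1 v_lt_z0 unfolding U_def by auto
  have c: "continuous_on {d..u n} (G n)" using cG[of d "u n" "2*n"] d_ab un v_ab unfolding U_def by auto
  obtain y where y: "y \<in> {d..u n}" "G n y = u 1"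
    using ivt_both[OF c, of "u 1"] un hu1 G_d[OF assms(1)] unfolding U_def by auto
  have "G (1 + n) y = G 1 (G n y)" by (rule G_add)
  then have "G (Suc n) y = d" using y u1 unfolding U_def by simp
  then have yU: "y \<in> U (Suc n)" using y un unfolding U_def by auto
  have "y \<noteq> u n" using y un u1 unfolding U_def by auto
  then have "y < u n" using y by auto
  then show ?thesis using yU u_min[OF yU] by auto
qed

lemma U_ne: "1 \<le> n \<Longrightarrow> U n \<noteq> {}"
proof (induction n)
  case 0 then show ?case by simp
next
  case (Suc n)
  then show ?case using U1 U_step[of n] by (cases "n = 0") auto
qed

lemma u_facts: assumes "1 \<le> n" shows "d < u n" "u n \<le> v" "G n (u n) = d" "d \<le> u n"
proof -
  have un: "u n \<in> U n" using uU[OF U_ne[OF assms]] .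
  then show "u n \<le> v" "G n (u n) = d" "d \<le> u n" unfolding U_def by auto
  have "u n \<noteq> d" using un G_d[OF assms] d_lt_z0 unfolding U_def by auto
  then show "d < u n" using un unfolding U_def by auto
qed

lemma u_dec: "1 \<le> n \<Longrightarrow> u (Suc n) < u n" using U_step U_ne by blast

lemma u_strict: assumes "1 \<le> pp" "pp < qq" shows "u qq < u pp"
  using assms(2)
proof (induction qq)
  case 0 then show ?case by simp
next
  case (Suc qq)
  show ?case
  proof (cases "pp = qq")
    case True then show ?thesis using u_dec assms(1) by simp
  next
    case False
    then have "u qq < u pp" using Suc by simp
    moreover have "u (Suc qq) < u qq" using u_dec[of qq] assms(1) Suc.prems False by simp
    ultimately show ?thesis by simp
  qed
qed

lemma u_anti: "1 \<le> pp \<Longrightarrow> pp \<le> qq \<Longrightarrow> u qq \<le> u pp"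
  using u_strict[of pp qq] by (cases "pp = qq") auto

lemma cGd: "d \<le> s \<Longrightarrow> t \<le> z0 \<Longrightarrow> continuous_on {s..t} (f^^k)"
  using cG d_ab z0_ab by auto

lemma lowerG: assumes "1 \<le> n" "x \<in> {d..<u n}" shows "d < G n x"
proof (rule ccontr)
  assume h: "\<not> d < G n x"
  have c: "continuous_on {d..x} (G n)" using cGd[of d x] assms u_facts[OF assms(1)] v_lt_z0 by auto
  obtain y where y: "y \<in> {d..x}" "G n y = d"
    using ivt_both[OF c, of d] h G_d[OF assms(1)] d_lt_z0 assms by auto
  have "y \<in> U n" unfolding U_def using y assms u_facts[OF assms(1)] by auto
  then have "u n \<le> y" by (rule u_min)
  then show False using y assms by auto
qed

lemma bandG: assumes "1 \<le> n" "x \<in> {d..<u n}" "t \<le> n" shows "d \<le> G t x \<and> G t x \<le> z0"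
  using assms(3)
proof (induction t)
  case 0 then show ?case using assms u_facts[OF assms(1)] v_lt_z0 by simp
next
  case (Suc t)
  then have ih: "G t x \<in> {d..z0}" by simp
  have up: "G (Suc t) x \<le> z0" using G_Suc[of t x] F5'[OF ih] by simp
  have "u n \<le> u (Suc t)" using u_anti[of "Suc t" n] Suc.prems by simp
  then have "d < G (Suc t) x" using lowerG[of "Suc t" x] assms by auto
  then show ?case using up by simp
qed

lemma R: assumes "1 \<le> n" "x \<in> {d..<u n}" "1 \<le> t" "t < n" shows "u (n - t) < G t x"
proof (rule ccontr)
  assume h: "\<not> u (n - t) < G t x"
  have nt: "1 \<le> n - t" using assms by simp
  have c: "continuous_on {d..x} (G t)" using cGd[of d x] assms u_facts[OF assms(1)] v_lt_z0 by auto
  have "u (n - t) \<le> z0" using u_facts[OF nt] v_lt_z0 by simp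
  then obtain y where y: "y \<in> {d..x}" "G t y = u (n - t)"
    using ivt_both[OF c, of "u (n - t)"] h G_d[OF assms(3)] assms by auto
  have "G ((n - t) + t) y = G (n - t) (G t y)" by (rule G_add)
  then have "G n y = d" using y u_facts[OF nt] assms by simp
  then have "y \<in> U n" unfolding U_def using y assms u_facts[OF assms(1)] by auto
  then have "u n \<le> y" by (rule u_min)
  then show False using y assms by auto
qed

lemma per_fix: assumes "(f^^k) x = x" "0 < k" "G t x = c" "g c = c" shows "x = c"
proof -
  have "(f^^(k * (2 * t))) x = x" using funpow_mult_fix[OF assms(1)] .
  then have x1: "G (k * t) x = x" by (simp add: ac_simps)
  have "k * t = (k * t - t) + t" using assms(2) by (simp add: le_add_diff_inverse2)
  then have "G (k * t) x = G (k * t - t) (G t x)" using G_add by metis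
  then show ?thesis using x1 assms(3) G_fix[OF assms(4)] by simp
qed

lemma main:
  assumes n1: "1 \<le> n" and i1: "1 \<le> i"
    and up: "up = Sup {x \<in> {u (n + 1)..u n}. (f ^^ (2 * n + 2 * i)) x = d}"
    and xin: "x \<in> {up..u n}" and lpx: "least_period f k x"
  shows "(odd k \<longrightarrow> k > 2 * n + 2 * i + 1) \<and>
         (even k \<and> k \<le> 2 * n + 2 * i \<longrightarrow> k = 2 * n + 2 * i \<or> k = 2 * n)"
proof -
  define N where "N = n + i"
  have N2: "2 * n + 2 * i = 2 * N" unfolding N_def by simp
  define V where "V = {x \<in> {u (Suc n)..u n}. G N x = d}"
  have upV: "up = Sup V" unfolding up V_def N2 by simp
  have un: "d < u n" "u n \<le> v" "G n (u n) = d" using u_facts[OF n1] by auto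
  have un1: "d < u (Suc n)" "G (Suc n) (u (Suc n)) = d" using u_facts[of "Suc n"] by auto
  have udec: "u (Suc n) < u n" using u_dec[OF n1] .
  have V_ne: "V \<noteq> {}"
  proof -
    define w where "w = (if i = 1 then d else u (i - 1))"
    have wG: "G (i - 1) w = d" using u_facts[of "i - 1"] i1 unfolding w_def by auto
    have wr0: "d \<le> w \<and> w \<le> z0"
    proof (cases "i = 1")
      case False
      then have "1 \<le> i - 1" using i1 by simp
      then show ?thesis using u_facts[of "i - 1"] v_lt_z0 False unfolding w_def by auto
    next
      case True
      then show ?thesis using d_lt_z0 unfolding w_def by auto
    qed
    then have wr: "d \<le> w" "w \<le> z0" by auto
    have gz: "G (Suc n) (u n) = z0" using G_Suc[of n "u n"] un d_props by simp
    have c: "continuous_on {u (Suc n)..u n} (G (Suc n))" by (rule cGd) (use un un1 v_lt_z0 in auto)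
    obtain y where y: "y \<in> {u (Suc n)..u n}" "G (Suc n) y = w"
      using ivt_both[OF c, of w] udec un1 gz wr by auto
    have NN: "(i - 1) + Suc n = N" unfolding N_def using i1 by simp
    have "G N y = G (i - 1) (G (Suc n) y)" unfolding NN[symmetric] by (rule G_add)
    also have "\<dots> = G (i - 1) w" by (simp only: y(2))
    finally have "G N y = d" using wG by (simp only:)
    then show ?thesis unfolding V_def using y by auto
  qed
  have V_closed: "closed V" unfolding V_def using cGd[of "u (Suc n)" "u n" "2*N"] un un1 v_lt_z0
    by (intro continuous_closed_preimage_constant) auto
  have V_bdd: "bdd_above V" unfolding V_def by (auto intro: bdd_aboveI[of _ "u n"])
  have upin: "up \<in> V" unfolding upV using closed_contains_Sup[OF V_ne V_bdd V_closed] .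
  have up_max: "y \<in> V \<Longrightarrow> y \<le> up" for y unfolding upV using V_bdd by (simp add: cSup_upper)
  have upf: "u (Suc n) \<le> up" "up \<le> u n" "G N up = d" using upin unfolding V_def by auto
  have k0: "0 < k" and fkx: "(f^^k) x = x" using lpx unfolding least_period_def by auto
  have xz0: "x < z0" using xin upf un v_lt_z0 by auto
  have noz: "G t x \<noteq> z0" for t
  proof
    assume "G t x = z0"
    then have "x = z0" using per_fix[OF fkx k0 _ z0_props(3)] by simp
    then show False using xz0 by simp
  qed
  have nod: "G t x \<noteq> d" for t
  proof
    assume "G t x = d"
    then have "G (Suc t) x = z0" using G_Suc[of t x] d_props by simp
    then show False using noz by blast
  qed
  have xne: "x \<noteq> up" "x \<noteq> u n" using nod[of N] nod[of n] upf un by auto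
  have xin2: "x \<in> {d..<u n}" using xin xne upf un1 by auto
  have xup: "up < x" using xin xne by auto
  have M1: "G n x < u i"
  proof (rule ccontr)
    assume h: "\<not> G n x < u i"
    have c: "continuous_on {x..u n} (G n)" using cGd[of x "u n"] xin2 un v_lt_z0 by auto
    obtain y where y: "y \<in> {x..u n}" "G n y = u i"
      using ivt_both[OF c, of "u i"] h un u_facts[OF i1] xin2 by auto
    have "G (i + n) y = G i (G n y)" by (rule G_add)
    then have "G N y = d" using y u_facts[OF i1] unfolding N_def by (simp add: add.commute)
    then have "y \<in> V" unfolding V_def using y xup upf by auto
    then have "y \<le> up" by (rule up_max)
    then show False using y xup by auto
  qed
  define yv where "yv = G n x"
  have yv_in: "yv \<in> {d..<u i}" using M1 lowerG[OF n1 xin2] unfolding yv_def by auto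
  have orbit: "d < G t x \<and> G t x < z0" if "t \<le> N" for t
  proof (cases "t \<le> n")
    case True
    then show ?thesis using bandG[OF n1 xin2 True] noz[of t] nod[of t] by auto
  next
    case False
    have "G ((t - n) + n) x = G (t - n) (G n x)" by (rule G_add)
    then have e1: "G t x = G (t - n) yv" using False unfolding yv_def by simp
    have "t - n \<le> i" using that False unfolding N_def by simp
    then have "d \<le> G (t - n) yv \<and> G (t - n) yv \<le> z0" using bandG[OF i1 yv_in] by blast
    then show ?thesis using e1 noz[of t] nod[of t] by auto
  qed
  have odd_part: "odd k \<longrightarrow> k > 2 * n + 2 * i + 1"
  proof
    assume ok: "odd k"
    show "k > 2 * n + 2 * i + 1"
    proof (rule ccontr)
      assume "\<not> k > 2 * n + 2 * i + 1"
      define t where "t = (k - 1) div 2"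
      have kt: "k = Suc (2 * t)" unfolding t_def using ok by (auto elim!: oddE)
      have tN: "t \<le> N" using kt \<open>\<not> k > 2 * n + 2 * i + 1\<close> unfolding N_def by simp
      have "(f^^k) x = f (G t x)" unfolding kt by simp
      moreover have "z0 < f (G t x)" using Phi orbit[OF tN] by simp
      ultimately show False using fkx xz0 by simp
    qed
  qed
  have even_part: "even k \<and> k \<le> 2 * n + 2 * i \<longrightarrow> k = 2 * n + 2 * i \<or> k = 2 * n"
  proof
    assume h: "even k \<and> k \<le> 2 * n + 2 * i"
    then obtain j where kj: "k = 2 * j" by (auto elim!: evenE)
    have j1: "1 \<le> j" using k0 kj by simp
    have jN: "j \<le> N" using h kj unfolding N_def by simp
    have Gj: "G j x = x" using fkx kj by simp
    have "j = n \<or> j = N"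
    proof (rule ccontr)
      assume nj: "\<not> (j = n \<or> j = N)"
      show False
      proof (cases "j < n")
        case True
        have "u (n - j) < G j x" using R[OF n1 xin2 j1 True] .
        moreover have "u n \<le> u (n - j)" using u_anti[of "n - j" n] True by simp
        ultimately show False using Gj xin2 by simp
      next
        case False
        then have jn: "n < j" "j < N" using nj jN by auto
        show False
        proof (cases "j < i")
          case True
          have "G (j + n) x = G j (G n x)" by (rule G_add)
          moreover have "G (n + j) x = G n (G j x)" by (rule G_add)
          ultimately have "G j yv = yv" using Gj unfolding yv_def by (simp add: add.commute)
          moreover have "u (i - j) < G j yv" using R[OF i1 yv_in j1 True] .
          moreover have "u i \<le> u (i - j)" using u_anti[of "i - j" i] True by simp
          ultimately show False using yv_in by simp
        next
          case False
          define s where "s = j - n"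
          have s1: "1 \<le> s" "s < i" using jn unfolding s_def N_def by auto
          have "G (s + n) x = G s (G n x)" by (rule G_add)
          then have "G s yv = x" using Gj jn unfolding s_def yv_def by simp
          moreover have "u (i - s) < G s yv" using R[OF i1 yv_in s1] .
          moreover have "u n \<le> u (i - s)" using u_anti[of "i - s" n] s1 False jn unfolding s_def N_def by simp
          ultimately show False using xin2 by simp
        qed
      qed
    qed
    then show "k = 2 * n + 2 * i \<or> k = 2 * n" using kj unfolding N_def by auto
  qed
  show ?thesis using odd_part even_part by blast
qed

end

theorem lemma8:
  fixes f :: "real \<Rightarrow> real" and a b p v z z0 d :: real and m :: nat and P :: "real set"
  assumes "a \<le> b"
    and "continuous_on {a..b} f" and "f ` {a..b} \<subseteq> {a..b}"
    and "odd m" and "m \<ge> 3"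
    and "p \<in> {a..b}" and "least_period f m p"
    and "P = {(f ^^ k) p | k. k < m}"
    and "v \<in> {Min P..<(f ^^ (m - 1)) (Min P)}" and "f v = (f ^^ (m - 1)) (Min P)"
    and "z \<in> {v<..<(f ^^ (m - 1)) (Min P)}" and "f z = z"
    and "z0 = Inf {x \<in> {v..z}. (f ^^ 2) x = x}"
    and "d = Sup {x \<in> {Min P..v}. (f ^^ 2) x = z0}"
  shows "\<forall>n \<ge> 1. \<forall>i \<ge> 1.
           (let u = (\<lambda>n. Inf {x \<in> {d..v}. (f ^^ (2 * n)) x = d});
                u' = Sup {x \<in> {u (n + 1)..u n}. (f ^^ (2 * n + 2 * i)) x = d}
            in \<forall>x \<in> {u'..u n}. \<forall>k. least_period f k x \<longrightarrow>
                 (odd k \<longrightarrow> k > 2 * n + 2 * i + 1) \<and>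
                 (even k \<and> k \<le> 2 * n + 2 * i \<longrightarrow> k = 2 * n + 2 * i \<or> k = 2 * n))"
proof -
  interpret L8 f a b p v z z0 d m P using assms by unfold_locales auto
  have ueq: "(\<lambda>n. Inf {x \<in> {d..v}. (f ^^ (2 * n)) x = d}) = u"
    by (auto simp: u_def U_def)
  show ?thesis unfolding Let_def ueq
  proof (intro allI impI ballI)
    fix n i x k
    assume "1 \<le> n" "1 \<le> i"
      "x \<in> {Sup {x \<in> {u (n + 1)..u n}. (f ^^ (2 * n + 2 * i)) x = d}..u n}"
      "least_period f k x"
    then show "(odd k \<longrightarrow> k > 2 * n + 2 * i + 1) \<and>
         (even k \<and> k \<le> 2 * n + 2 * i \<longrightarrow> k = 2 * n + 2 * i \<or> k = 2 * n)"
      using main[OF _ _ refl] by blast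
  qed
qed

end
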